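(* Let $n\ge 3$, $k\ge 1$ and $p\in\{0,1,2\}$. Then \[ \Gamma_{\rm S}(C_n,C_{3k+p})= \begin{cases} kn, & p=0,\\ kn+\lceil n/3\rceil, & p=1,\\ (k+1)n, & p=2. \end{cases} \]
   Context: $C_m$ denotes the cycle on $m$ vertices; $\gamma$ denotes the domination number. For graphs $G,H$ and a function $f\colon V(G)\to V(H)$, the Sierpiński product $G\otimes_f H$ is the graph with vertex set $V(G)\times V(H)$ and edges of two types: (type 1) $(g,h)(g,h')$ for every $g\in V(G)$ and every edge $hh'\in E(H)$; (type 2) $(g,f(g'))(g',f(g))$ for every edge $gg'\in E(G)$. The upper Sierpiński domination number is $\Gamma_{\rm S}(G,H)=\max_{f}\gamma(G\otimes_f H)$ over all functions $f\colon V(G)\to V(H)$. *)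

theory Defs
  imports Complex_Main
begin

text \<open>A (finite simple) graph is represented by a vertex set together with an
adjacency predicate; only adjacencies between vertices of the vertex set matter.\<close>

type_synonym 'v graph = "'v set \<times> ('v \<Rightarrow> 'v \<Rightarrow> bool)"

definition verts :: "'v graph \<Rightarrow> 'v set" where "verts G = fst G"
definition adj :: "'v graph \<Rightarrow> 'v \<Rightarrow> 'v \<Rightarrow> bool" where "adj G = snd G"

definition cycle_graph :: "nat \<Rightarrow> nat graph" where
  "cycle_graph m = ({0..<m},
     (\<lambda>i j. i < m \<and> j < m \<and> i \<noteq> j \<and> (j = (i + 1) mod m \<or> i = (j + 1) mod m)))"

definition dominating_set :: "'v graph \<Rightarrow> 'v set \<Rightarrow> bool" where
  "dominating_set G D \<longleftrightarrow> D \<subseteq> verts G \<and>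
     (\<forall>v \<in> verts G. v \<in> D \<or> (\<exists>u \<in> D. adj G u v))"

definition domination_number :: "'v graph \<Rightarrow> nat" where
  "domination_number G = Min (card ` {D. dominating_set G D})"

text \<open>Sierpinski product G \<otimes>_f H: vertex set V(G) \<times> V(H); type-1 edges
(g,h)(g,h') for hh' \<in> E(H); type-2 edges (g,f g')(g',f g) for gg' \<in> E(G).\<close>
definition sierpinski_product :: "'a graph \<Rightarrow> 'b graph \<Rightarrow> ('a \<Rightarrow> 'b) \<Rightarrow> ('a \<times> 'b) graph" where
  "sierpinski_product G H f = (verts G \<times> verts H,
     (\<lambda>x y. x \<in> verts G \<times> verts H \<and> y \<in> verts G \<times> verts H \<and>
        ((fst x = fst y \<and> adj H (snd x) (snd y)) \<or>
         (adj G (fst x) (fst y) \<and> snd x = f (fst y) \<and> snd y = f (fst x)))))"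

text \<open>Upper Sierpinski domination number: maximum over all f : V(G) \<rightarrow> V(H).
Only the values of f on V(G) matter.\<close>
definition upper_sierpinski_domination :: "'a graph \<Rightarrow> 'b graph \<Rightarrow> nat" where
  "upper_sierpinski_domination G H =
     Max {domination_number (sierpinski_product G H f) | f. f ` verts G \<subseteq> verts H}"

end

theory Submission imports Defs begin

lemma verts_C[simp]: "verts (cycle_graph m) = {0..<m}"
  by (simp add: verts_def cycle_graph_def)

lemma adj_C: "adj (cycle_graph m) i j \<longleftrightarrow> (i<m \<and> j<m \<and> i\<noteq>j \<and> (j = (i+1) mod m \<or> i = (j+1) mod m))"
  by (simp add: adj_def cycle_graph_def)

lemma adj_C_sym: "adj (cycle_graph m) i j \<longleftrightarrow> adj (cycle_graph m) j i"
  by (auto simp: adj_C)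

lemma adj_succ: "m \<ge> 3 \<Longrightarrow> u < m \<Longrightarrow> adj (cycle_graph m) u ((u+1) mod m)"
proof (cases "u+1 < m")
  case False assume "m\<ge>3" "u<m"
  hence "u + 1 = m" using False by simp
  thus ?thesis unfolding adj_C using \<open>m\<ge>3\<close> by auto
qed (auto simp: adj_C)

lemma pred_succ: "(m::nat) \<ge> 3 \<Longrightarrow> u < m \<Longrightarrow> ((u+m-1) mod m + 1) mod m = u"
proof -
  assume m: "m \<ge> 3" and u: "u < m"
  show ?thesis
  proof (cases "u = 0")
    case True
    have e1: "u+m-1 = m - 1" using True by simp
    have e2: "(m-1) mod m = m - 1" using m by (intro mod_less) simp
    have "(u+m-1) mod m + 1 = m" unfolding e1 e2 using m by simp
    thus ?thesis using True by simp
  next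
    case False
    have "u + m - 1 = (u - 1) + m" using False by simp
    hence "(u+m-1) mod m = (u-1) mod m" by simp
    also have "\<dots> = u - 1" using u by (intro mod_less) simp
    finally have "(u+m-1) mod m + 1 = u" using False by simp
    thus ?thesis using u by simp
  qed
qed
lemma adj_pred: "m \<ge> 3 \<Longrightarrow> u < m \<Longrightarrow> adj (cycle_graph m) ((u+m-1) mod m) u"
  using adj_succ[of m "(u+m-1) mod m"] pred_succ[of m u] by simp

lemma adj_nbr: "adj (cycle_graph m) u v \<Longrightarrow> v = (u+1) mod m \<or> v = (u+m-1) mod m"
proof -
  assume a: "adj (cycle_graph m) u v"
  hence uv: "u<m" "v<m" "v = (u+1) mod m \<or> u = (v+1) mod m" by (auto simp: adj_C)
  show ?thesis
  proof (cases "v = (u+1) mod m")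
    case False
    hence u: "u = (v+1) mod m" using uv by blast
    show ?thesis
    proof (cases "v+1 < m")
      case True
      hence "u = v+1" using u by simp
      hence "u+m-1 = v + m" by simp
      hence "(u+m-1) mod m = v" using uv(2) by simp
      thus ?thesis by simp
    next
      case F2: False
      hence "v+1 = m" using uv(2) by simp
      hence "u = 0" "v = m - 1" using u by auto
      thus ?thesis using uv(2) by simp
    qed
  qed simp
qed

definition nbhd :: "nat \<Rightarrow> nat set \<Rightarrow> nat set" where
  "nbhd m X = {v. v < m \<and> (v \<in> X \<or> (\<exists>u\<in>X. adj (cycle_graph m) u v))}"

lemma nbhd_card: "finite X \<Longrightarrow> card (nbhd m X) \<le> 3 * card X"
proof -
  assume fX: "finite X"
  have "nbhd m X \<subseteq> (\<Union>u\<in>X. {u, (u+1) mod m, (u+m-1) mod m})"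
    unfolding nbhd_def using adj_nbr by blast
  hence "card (nbhd m X) \<le> card (\<Union>u\<in>X. {u, (u+1) mod m, (u+m-1) mod m})"
    by (intro card_mono) (use fX in auto)
  also have "\<dots> \<le> (\<Sum>u\<in>X. card {u, (u+1) mod m, (u+m-1) mod m})"
    by (rule card_UN_le[OF fX])
  also have "\<dots> \<le> (\<Sum>u\<in>X. 3)"
    by (intro sum_mono) (simp add: card_insert_if)
  finally show ?thesis by simp
qed


abbreviation SP :: "nat \<Rightarrow> nat \<Rightarrow> (nat \<Rightarrow> nat) \<Rightarrow> (nat \<times> nat) graph" where
  "SP n m f \<equiv> sierpinski_product (cycle_graph n) (cycle_graph m) f"

lemma sp_verts[simp]: "verts (SP n m f) = {0..<n} \<times> {0..<m}"
  by (simp add: sierpinski_product_def verts_def cycle_graph_def)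

lemma sp_adj: "adj (SP n m f) x y \<longleftrightarrow> x \<in> {0..<n} \<times> {0..<m} \<and> y \<in> {0..<n} \<times> {0..<m} \<and>
   ((fst x = fst y \<and> adj (cycle_graph m) (snd x) (snd y)) \<or>
    (adj (cycle_graph n) (fst x) (fst y) \<and> snd x = f (fst y) \<and> snd y = f (fst x)))"
  by (simp add: sierpinski_product_def adj_def)

lemma dn_le: "finite (verts G) \<Longrightarrow> dominating_set G D \<Longrightarrow> domination_number G \<le> card D"
  unfolding domination_number_def
proof (rule Min_le)
  assume "finite (verts G)"
  have "card ` {D. dominating_set G D} \<subseteq> card ` Pow (verts G)"
    by (auto simp: dominating_set_def)
  thus "finite (card ` {D. dominating_set G D})"
    using \<open>finite (verts G)\<close> finite_subset by blast
qed auto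

lemma dn_ge: assumes "finite (verts G)" "\<And>D. dominating_set G D \<Longrightarrow> B \<le> card D"
  shows "B \<le> domination_number G"
proof -
  have "card ` {D. dominating_set G D} \<subseteq> card ` Pow (verts G)"
    by (auto simp: dominating_set_def)
  hence fin: "finite (card ` {D. dominating_set G D})"
    using assms(1) finite_subset by blast
  have "dominating_set G (verts G)" by (simp add: dominating_set_def)
  hence ne: "card ` {D. dominating_set G D} \<noteq> {}" by auto
  have "domination_number G \<in> card ` {D. dominating_set G D}"
    unfolding domination_number_def using Min_in[OF fin ne] .
  thus ?thesis using assms(2) by auto
qed

lemma dn_le_verts: "finite (verts G) \<Longrightarrow> domination_number G \<le> card (verts G)"
  by (rule dn_le) (auto simp: dominating_set_def)

lemma copy_cover:
  assumes "dominating_set (SP n m f) D" "g < n"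
  shows "{0..<m} \<subseteq> nbhd m {h. (g,h)\<in>D} \<union> f ` {g'. adj (cycle_graph n) g' g \<and> (g', f g) \<in> D}"
proof
  fix x assume "x \<in> {0..<m}"
  hence "(g,x) \<in> verts (SP n m f)" using assms(2) by simp
  hence "(g,x) \<in> D \<or> (\<exists>u\<in>D. adj (SP n m f) u (g,x))"
    using assms(1) unfolding dominating_set_def by blast
  thus "x \<in> nbhd m {h. (g,h)\<in>D} \<union> f ` {g'. adj (cycle_graph n) g' g \<and> (g', f g) \<in> D}"
  proof
    assume "(g,x) \<in> D" thus ?thesis using \<open>x \<in> {0..<m}\<close> by (auto simp: nbhd_def)
  next
    assume "\<exists>u\<in>D. adj (SP n m f) u (g,x)"
    then obtain a b where ab: "(a,b) \<in> D" "adj (SP n m f) (a,b) (g,x)" by auto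
    from ab(2) have "(a = g \<and> adj (cycle_graph m) b x) \<or> (adj (cycle_graph n) a g \<and> b = f g \<and> x = f a)"
      by (simp add: sp_adj)
    thus ?thesis
    proof
      assume "a = g \<and> adj (cycle_graph m) b x"
      thus ?thesis using ab(1) \<open>x \<in> {0..<m}\<close> by (auto simp: nbhd_def)
    next
      assume "adj (cycle_graph n) a g \<and> b = f g \<and> x = f a"
      thus ?thesis using ab(1) by auto
    qed
  qed
qed

lemma fin_slice: fixes D :: "(nat\<times>nat) set" assumes "D \<subseteq> {0..<n} \<times> {0..<m}"
  shows "finite {h. (g,h) \<in> D}"
proof -
  have "{h. (g,h) \<in> D} \<subseteq> {0..<m}" using assms by auto
  thus ?thesis using finite_subset by blast
qed

lemma copy_lower:
  assumes "dominating_set (SP n m f) D" "g < n" "f ` {g'. adj (cycle_graph n) g' g \<and> (g', f g) \<in> D} \<subseteq> E" "finite E"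
  shows "m \<le> 3 * card {h. (g,h)\<in>D} + card E"
proof -
  have sub: "D \<subseteq> {0..<n} \<times> {0..<m}" using assms(1) by (simp add: dominating_set_def)
  have "m = card {0..<m}" by simp
  also have "\<dots> \<le> card (nbhd m {h. (g,h)\<in>D} \<union> E)"
  proof (rule card_mono)
    show "finite (nbhd m {h. (g, h) \<in> D} \<union> E)" using assms(4) by (auto simp: nbhd_def)
    show "{0..<m} \<subseteq> nbhd m {h. (g, h) \<in> D} \<union> E" using copy_cover[OF assms(1,2)] assms(3) by blast
  qed
  also have "\<dots> \<le> card (nbhd m {h. (g,h)\<in>D}) + card E" by (rule card_Un_le)
  also have "\<dots> \<le> 3 * card {h. (g,h)\<in>D} + card E"
  proof -
    have "finite {h. (g,h)\<in>D}" by (rule finite_subset[of _ "{0..<m}"]) (use sub in auto)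
    thus ?thesis using nbhd_card by simp
  qed
  finally show ?thesis .
qed

lemma card_D: fixes D :: "(nat\<times>nat) set" assumes "D \<subseteq> {0..<n} \<times> {0..<m}"
  shows "card D = (\<Sum>g<n. card {h. (g,h) \<in> D})"
proof -
  have "D = Sigma {..<n} (\<lambda>g. {h. (g,h) \<in> D})" using assms by auto
  hence "card D = card (Sigma {..<n} (\<lambda>g. {h. (g,h) \<in> D}))" by simp
  also have "\<dots> = (\<Sum>g<n. card {h. (g,h) \<in> D})"
    apply (rule card_SigmaI) apply simp
    apply (intro ballI, rule finite_subset[of _ "{0..<m}"]) using assms by auto 
  finally show ?thesis .
qed

lemma ext_gen: "f ` {g'. adj (cycle_graph n) g' g \<and> (g', f g) \<in> D} \<subseteq> f ` {(g+1) mod n, (g+n-1) mod n}"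
  using adj_nbr adj_C_sym by blast

lemma ext_const: "(\<lambda>_. c) ` X \<subseteq> {c}" by auto


lemma dom_sub: "dominating_set (SP n m f) D \<Longrightarrow> D \<subseteq> {0..<n} \<times> {0..<m}"
  by (simp add: dominating_set_def)

lemma lower0: assumes "dominating_set (SP n (3*k) f) D"
  shows "k*n \<le> card D"
proof -
  have "\<And>g. g<n \<Longrightarrow> k \<le> card {h. (g,h)\<in>D}"
  proof -
    fix g assume "g<n"
    have "card (f ` {(g+1) mod n, (g+n-1) mod n}) \<le> 2"
      by (rule order.trans[OF card_image_le]) (auto simp: card_insert_if)
    hence "3*k \<le> 3 * card {h. (g,h)\<in>D} + 2"
      using copy_lower[OF assms \<open>g<n\<close> ext_gen] by fastforce
    thus "k \<le> card {h. (g,h)\<in>D}" by linarith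
  qed
  hence "(\<Sum>g<n. k) \<le> (\<Sum>g<n. card {h. (g,h)\<in>D})" by (intro sum_mono) auto
  thus ?thesis using card_D[OF dom_sub[OF assms]] by (simp add: mult.commute)
qed

lemma lower2: assumes "dominating_set (SP n (3*k+2) (\<lambda>_. 0)) D"
  shows "(k+1)*n \<le> card D"
proof -
  have "\<And>g. g<n \<Longrightarrow> k+1 \<le> card {h. (g,h)\<in>D}"
  proof -
    fix g assume "g<n"
    have "3*k+2 \<le> 3 * card {h. (g,h)\<in>D} + card {0::nat}"
      by (rule copy_lower[OF assms \<open>g<n\<close>]) auto
    thus "k+1 \<le> card {h. (g,h)\<in>D}" by simp
  qed
  hence "(\<Sum>g<n. k+1) \<le> (\<Sum>g<n. card {h. (g,h)\<in>D})" by (intro sum_mono) auto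
  thus ?thesis using card_D[OF dom_sub[OF assms]] by (simp add: mult.commute)
qed

lemma lower1: assumes "dominating_set (SP n (3*k+1) (\<lambda>_. 0)) D"
  shows "k*n + (n+2) div 3 \<le> card D"
proof -
  let ?d = "\<lambda>g. card {h. (g,h)\<in>D}"
  let ?E = "\<lambda>g. (\<lambda>_. 0::nat) ` {g'. adj (cycle_graph n) g' g \<and> (g', 0) \<in> D}"
  have sub: "D \<subseteq> {0..<n} \<times> {0..<3*k+1}" using dom_sub[OF assms] .
  have fin: "\<And>g. finite {h. (g,h)\<in>D}"
    by (rule finite_subset[of _ "{0..<3*k+1}"]) (use sub in auto)
  have cov: "\<And>g. g<n \<Longrightarrow> {0..<3*k+1} \<subseteq> nbhd (3*k+1) {h. (g,h)\<in>D} \<union> ?E g"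
    using copy_cover[OF assms] by simp
  have lowk: "\<And>g. g<n \<Longrightarrow> k \<le> ?d g"
  proof -
    fix g assume "g<n"
    have "3*k+1 \<le> 3 * ?d g + card {0::nat}"
      by (rule copy_lower[OF assms \<open>g<n\<close>]) auto
    thus "k \<le> ?d g" by simp
  qed
  have light: "\<And>g. g<n \<Longrightarrow> ?d g \<le> k \<Longrightarrow> (g,0) \<notin> D \<and> (\<exists>g'. adj (cycle_graph n) g' g \<and> (g', 0) \<in> D)"
  proof -
    fix g assume g: "g<n" "?d g \<le> k"
    have c3: "card (nbhd (3*k+1) {h. (g,h)\<in>D}) \<le> 3*k"
      using nbhd_card[OF fin, of "3*k+1" g] g(2) by linarith
    have fn: "finite (nbhd (3*k+1) {h. (g,h)\<in>D})" by (auto simp: nbhd_def)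
    have A: "0 \<notin> nbhd (3*k+1) {h. (g,h)\<in>D}"
    proof
      assume "0 \<in> nbhd (3*k+1) {h. (g,h)\<in>D}"
      hence "{0..<3*k+1} \<subseteq> nbhd (3*k+1) {h. (g,h)\<in>D}" using cov[OF g(1)] by auto
      hence "card {0..<3*k+1} \<le> 3*k" using card_mono[OF fn] c3 by (meson order.trans)
      thus False by simp
    qed
    hence "(g,0) \<notin> D" by (auto simp: nbhd_def)
    moreover have "?E g \<noteq> {}"
    proof
      assume "?E g = {}"
      hence "{0..<3*k+1} \<subseteq> nbhd (3*k+1) {h. (g,h)\<in>D}" using cov[OF g(1)] by auto
      hence "card {0..<3*k+1} \<le> 3*k" using card_mono[OF fn] c3 by (meson order.trans)
      thus False by simp
    qed
    ultimately show "(g,0) \<notin> D \<and> (\<exists>g'. adj (cycle_graph n) g' g \<and> (g', 0) \<in> D)" by auto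
  qed
  define W where "W = {g. g<n \<and> k+1 \<le> ?d g}"
  have Wsub: "W \<subseteq> {..<n}" by (auto simp: W_def)
  have "{0..<n} \<subseteq> nbhd n W"
  proof
    fix g assume "g \<in> {0..<n}"
    show "g \<in> nbhd n W"
    proof (cases "g \<in> W")
      case True thus ?thesis using \<open>g \<in> {0..<n}\<close> by (auto simp: nbhd_def)
    next
      case False
      hence "?d g \<le> k" using \<open>g \<in> {0..<n}\<close> by (auto simp: W_def)
      then obtain g' where g': "adj (cycle_graph n) g' g" "(g',0) \<in> D" using light \<open>g \<in> {0..<n}\<close> by auto
      have "g' < n" using g'(1) by (simp add: adj_C)
      have "g' \<in> W"
      proof (rule ccontr)
        assume "g' \<notin> W"
        hence "?d g' \<le> k" using \<open>g'<n\<close> by (auto simp: W_def)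
        thus False using light[OF \<open>g'<n\<close>] g'(2) by auto
      qed
      thus ?thesis using g' \<open>g \<in> {0..<n}\<close> by (auto simp: nbhd_def)
    qed
  qed
  hence "n \<le> card (nbhd n W)"
    using card_mono[of "nbhd n W" "{0..<n}"] by (auto simp: nbhd_def)
  also have "\<dots> \<le> 3 * card W" using nbhd_card[of W n] Wsub finite_subset by blast
  finally have W3: "(n+2) div 3 \<le> card W" by linarith
  have "(\<Sum>g<n. k + (if g \<in> W then 1 else 0)) \<le> (\<Sum>g<n. ?d g)"
  proof (intro sum_mono)
    fix g assume "g \<in> {..<n}"
    thus "k + (if g \<in> W then 1 else 0) \<le> ?d g" using lowk by (auto simp: W_def)
  qed
  moreover have "(\<Sum>g<n. k + (if g \<in> W then 1 else 0)) = k*n + card W"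
  proof -
    have "(\<Sum>g<n. (if g \<in> W then 1 else 0::nat)) = card W"
    proof -
      have "(\<Sum>g<n. (if g \<in> W then 1 else 0::nat)) = (\<Sum>g\<in>{g\<in>{..<n}. g \<in> W}. 1)"
        by (rule sum.inter_filter[symmetric]) simp
      also have "{g\<in>{..<n}. g \<in> W} = W" using Wsub by auto
      finally show ?thesis by simp
    qed
    thus ?thesis by (simp add: sum.distrib mult.commute)
  qed
  ultimately show ?thesis using card_D[OF sub] W3 by linarith
qed


definition rot :: "nat \<Rightarrow> nat \<Rightarrow> nat \<Rightarrow> nat" where "rot m a i = (a + i) mod m"

lemma rot_Suc: "rot m a (Suc i) = (rot m a i + 1) mod m"
  by (simp add: rot_def mod_Suc_eq)

lemma rot_lt: "m > 0 \<Longrightarrow> rot m a i < m" by (simp add: rot_def)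

lemma rot_adj: "m \<ge> 3 \<Longrightarrow> adj (cycle_graph m) (rot m a i) (rot m a (Suc i))"
  unfolding rot_Suc by (rule adj_succ) (auto simp: rot_lt)

lemma rot_inv: "(a::nat) < m \<Longrightarrow> x < m \<Longrightarrow> rot m a ((x+m-a) mod m) = x"
proof -
  assume "a<m" "x<m"
  have "rot m a ((x+m-a) mod m) = (a + (x+m-a)) mod m" by (simp add: rot_def mod_add_right_eq)
  also have "a + (x+m-a) = x + m" using \<open>a<m\<close> by simp
  finally show ?thesis using \<open>x<m\<close> by simp
qed

lemma rot_m: "rot m a m = rot m a 0" by (simp add: rot_def)

lemma rot_dom:
  assumes "m \<ge> 3" "a < m" "x < m" "y = (x+m-a) mod m"
    "y \<in> J \<or> y+1 \<in> J \<or> (y \<ge> 1 \<and> y-1 \<in> J) \<or> (y+1 = m \<and> 0 \<in> J)"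
  shows "x \<in> nbhd m (rot m a ` J)"
proof -
  have x: "x = rot m a y" using rot_inv[OF assms(2,3)] assms(4) by simp
  from assms(5) show ?thesis
  proof (elim disjE)
    assume "y \<in> J" thus ?thesis using x assms(3) by (auto simp: nbhd_def)
  next
    assume "y+1 \<in> J"
    moreover have "adj (cycle_graph m) (rot m a (Suc y)) x"
      using rot_adj[OF assms(1), of a y] x adj_C_sym by blast
    ultimately show ?thesis using assms(3) by (auto simp: nbhd_def)
  next
    assume h: "y \<ge> 1 \<and> y-1 \<in> J"
    hence "Suc (y-1) = y" by simp
    hence "adj (cycle_graph m) (rot m a (y-1)) x"
      using rot_adj[OF assms(1), of a "y-1"] x by simp
    thus ?thesis using h assms(3) by (auto simp: nbhd_def)
  next
    assume h: "y+1 = m \<and> 0 \<in> J"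
    hence "rot m a (Suc y) = rot m a 0" using rot_m by simp
    hence "adj (cycle_graph m) (rot m a 0) x"
      using rot_adj[OF assms(1), of a y] x adj_C_sym by metis
    thus ?thesis using h assms(3) by (auto simp: nbhd_def)
  qed
qed

lemma h_lt: "3*q < (M::nat) \<Longrightarrow> q < (M+2) div 3" by presburger

lemma h_dm: "(y::nat) = 3*(y div 3) + y mod 3" by simp

lemma J0: fixes y :: nat assumes "y < 3*k'"
  shows "y \<in> (\<lambda>i. 3*i+1) ` {..<k'} \<or> y+1 \<in> (\<lambda>i. 3*i+1) ` {..<k'} \<or> (y \<ge> 1 \<and> y-1 \<in> (\<lambda>i. 3*i+1) ` {..<k'})"
proof -
  note e = h_dm[of y]
  consider "y mod 3 = 0" | "y mod 3 = 1" | "y mod 3 = 2" by linarith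
  thus ?thesis
  proof cases
    case 1
    have "y+1 = 3*(y div 3)+1" "y div 3 < k'" using 1 e assms by linarith+
    thus ?thesis by blast
  next
    case 2
    have "y = 3*(y div 3)+1" "y div 3 < k'" using 2 e assms by linarith+
    thus ?thesis by blast
  next
    case 3
    have "y \<ge> 1" "y-1 = 3*(y div 3)+1" "y div 3 < k'" using 3 e assms by linarith+
    thus ?thesis by blast
  qed
qed

lemma Jn: fixes y :: nat assumes "1 \<le> y" "y \<le> 3*k"
  shows "y \<in> (\<lambda>i. 3*i+2) ` {..<k} \<or> y+1 \<in> (\<lambda>i. 3*i+2) ` {..<k} \<or> (y \<ge> 1 \<and> y-1 \<in> (\<lambda>i. 3*i+2) ` {..<k})"
proof -
  note e = h_dm[of y]
  consider "y mod 3 = 0" | "y mod 3 = 1" | "y mod 3 = 2" by linarith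
  thus ?thesis
  proof cases
    case 1
    have "y-1 = 3*(y div 3 - 1)+2" "y div 3 - 1 < k" using 1 e assms by linarith+
    thus ?thesis using assms by blast
  next
    case 2
    have "y+1 = 3*(y div 3)+2" "y div 3 < k" using 2 e assms by linarith+
    thus ?thesis by blast
  next
    case 3
    have "y = 3*(y div 3)+2" "y div 3 < k" using 3 e assms by linarith+
    thus ?thesis by blast
  qed
qed

definition Jh :: "nat \<Rightarrow> nat \<Rightarrow> nat set" where
  "Jh d m = (\<lambda>i. 3*i) ` {..<(d+2) div 3} \<union> (\<lambda>i. d+3*i) ` {..<(m-d+2) div 3}"

lemma Jh_0: "d < m \<Longrightarrow> 0 \<in> Jh d m"
proof (cases "d = 0")
  case True assume "d<m"
  hence "0 < (m-d+2) div 3" by simp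
  thus ?thesis using True unfolding Jh_def by force
next
  case False
  hence "0 < (d+2) div 3" by simp
  thus ?thesis unfolding Jh_def by force
qed

lemma Jh_d: "d < m \<Longrightarrow> d \<in> Jh d m"
proof -
  assume "d<m" hence "0 < (m-d+2) div 3" by simp
  thus ?thesis unfolding Jh_def by force
qed

lemma Jh_dom: assumes "d < m" "y < m"
  shows "y \<in> Jh d m \<or> y+1 \<in> Jh d m \<or> (y \<ge> 1 \<and> y-1 \<in> Jh d m) \<or> (y+1 = m \<and> 0 \<in> Jh d m)"
proof (cases "y < d")
  case True
  note e = h_dm[of y]
  consider "y mod 3 = 0" | "y mod 3 = 1" | "y mod 3 = 2" by linarith
  thus ?thesis
  proof cases
    case 1
    have "y = 3*(y div 3)" using 1 e by linarith
    moreover have "y div 3 < (d+2) div 3" by (rule h_lt) (use 1 e True in linarith)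
    ultimately show ?thesis unfolding Jh_def by blast
  next
    case 2
    have "y \<ge> 1" "y-1 = 3*(y div 3)" using 2 e by linarith+
    moreover have "y div 3 < (d+2) div 3" by (rule h_lt) (use 2 e True in linarith)
    ultimately show ?thesis unfolding Jh_def by blast
  next
    case 3
    show ?thesis
    proof (cases "y+1 < d")
      case True
      have "y+1 = 3*(y div 3) + 3" using 3 e by linarith
      hence yy: "y+1 = 3*(y div 3 + 1)" by simp
      moreover have "y div 3 + 1 < (d+2) div 3" by (rule h_lt) (use yy True in linarith)
      ultimately show ?thesis unfolding Jh_def by blast
    next
      case False
      hence "y+1 = d" using \<open>y<d\<close> by simp
      thus ?thesis using Jh_d[OF assms(1)] by simp
    qed
  qed
next
  case False
  define z where "z = y - d"
  have yz: "y = d + z" "z < m - d" using False assms z_def by auto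
  note e = h_dm[of z]
  consider "z mod 3 = 0" | "z mod 3 = 1" | "z mod 3 = 2" by linarith
  thus ?thesis
  proof cases
    case 1
    have "y = d + 3*(z div 3)" using 1 e yz by linarith
    moreover have "z div 3 < (m-d+2) div 3" by (rule h_lt) (use 1 e yz in linarith)
    ultimately show ?thesis unfolding Jh_def by blast
  next
    case 2
    have "y \<ge> 1" "y-1 = d + 3*(z div 3)" using 2 e yz by linarith+
    moreover have "z div 3 < (m-d+2) div 3" by (rule h_lt) (use 2 e yz in linarith)
    ultimately show ?thesis unfolding Jh_def by blast
  next
    case 3
    show ?thesis
    proof (cases "z+1 < m - d")
      case True
      have "y+1 = d + 3*(z div 3) + 3" using 3 e yz by linarith
      hence yy: "y+1 = d + 3*(z div 3 + 1)" by simp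
      moreover have "z div 3 + 1 < (m-d+2) div 3" by (rule h_lt) (use yy yz True in linarith)
      ultimately show ?thesis unfolding Jh_def by blast
    next
      case False
      hence "y+1 = m" using yz assms by simp
      thus ?thesis using Jh_0[OF assms(1)] by simp
    qed
  qed
qed

lemma Jh_card: assumes "d < 3*k+1" shows "card (Jh d (3*k+1)) \<le> k+1"
proof -
  have "card (Jh d (3*k+1)) \<le> card ((\<lambda>i. 3*i) ` {..<(d+2) div 3}) + card ((\<lambda>i. d+3*i) ` {..<(3*k+1-d+2) div 3})"
    unfolding Jh_def by (rule card_Un_le)
  also have "\<dots> \<le> (d+2) div 3 + (3*k+1-d+2) div 3"
    using card_image_le[of "{..<(d+2) div 3}" "\<lambda>i. 3*i"] card_image_le[of "{..<(3*k+1-d+2) div 3}" "\<lambda>i. d+3*i"]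
    by simp
  also have "\<dots> \<le> k+1"
  proof -
    have "(d+2) div 3 * 3 \<le> d+2" "(3*k+1-d+2) div 3 * 3 \<le> 3*k+1-d+2"
      by (rule div_times_less_eq_dividend)+
    thus ?thesis using assms by linarith
  qed
  finally show ?thesis .
qed


lemma dom_assemble:
  assumes sub: "\<And>g. g<n \<Longrightarrow> Dc g \<subseteq> {0..<m}"
    and cov: "\<And>g x. g<n \<Longrightarrow> x<m \<Longrightarrow> x \<in> nbhd m (Dc g) \<or> (\<exists>g'. adj (cycle_graph n) g' g \<and> f g \<in> Dc g' \<and> x = f g')"
  shows "dominating_set (SP n m f) (Sigma {..<n} Dc)"
  unfolding dominating_set_def
proof (intro conjI ballI)
  show "Sigma {..<n} Dc \<subseteq> verts (SP n m f)" using sub by auto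
next
  fix v assume "v \<in> verts (SP n m f)"
  then obtain g x where v: "v = (g,x)" "g<n" "x<m" by auto
  from cov[OF v(2,3)] show "v \<in> Sigma {..<n} Dc \<or> (\<exists>u\<in>Sigma {..<n} Dc. adj (SP n m f) u v)"
  proof
    assume "x \<in> nbhd m (Dc g)"
    hence "x \<in> Dc g \<or> (\<exists>u\<in>Dc g. adj (cycle_graph m) u x)" by (simp add: nbhd_def)
    thus ?thesis
    proof
      assume "\<exists>u\<in>Dc g. adj (cycle_graph m) u x"
      then obtain u where u: "u \<in> Dc g" "adj (cycle_graph m) u x" by auto
      have "adj (SP n m f) (g,u) v" using u v sub[OF v(2)] by (auto simp: sp_adj)
      thus ?thesis using u v by auto
    qed (use v in auto)
  next
    assume "\<exists>g'. adj (cycle_graph n) g' g \<and> f g \<in> Dc g' \<and> x = f g'"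
    then obtain g' where g': "adj (cycle_graph n) g' g" "f g \<in> Dc g'" "x = f g'" by auto
    have "g' < n" using g'(1) by (simp add: adj_C)
    have "f g < m" using sub[OF \<open>g'<n\<close>] g'(2) by auto
    have "adj (SP n m f) (g', f g) v" using g' v \<open>g'<n\<close> \<open>f g < m\<close> by (auto simp: sp_adj)
    thus ?thesis using g' \<open>g'<n\<close> by auto
  qed
qed

lemma card_sigma_le: fixes n :: nat and Dc :: "nat \<Rightarrow> nat set" assumes "\<And>g. g<n \<Longrightarrow> Dc g \<subseteq> {0..<(m::nat)}" "\<And>g. g<n \<Longrightarrow> card (Dc g) \<le> c g"
  shows "card (Sigma {..<n} Dc) \<le> (\<Sum>g<n. c g)"
proof -
  have "card (Sigma {..<n} Dc) = (\<Sum>g<n. card (Dc g))"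
    apply (rule card_SigmaI) apply simp
    apply (intro ballI, rule finite_subset[of _ "{0..<m}"]) using assms(1) by auto
  also have "\<dots> \<le> (\<Sum>g<n. c g)" using assms(2) by (intro sum_mono) auto
  finally show ?thesis .
qed

lemma upper02:
  assumes "3*k' \<ge> m" "m \<ge> 3" "n \<ge> 1"
  shows "domination_number (SP n m f) \<le> k' * n"
proof -
  define Dc where "Dc = (\<lambda>g::nat. rot m 0 ` ((\<lambda>i. 3*i+1) ` {..<k'}))"
  have sub: "\<And>g. Dc g \<subseteq> {0..<m}" using rot_lt assms(2) by (auto simp: Dc_def)
  have "dominating_set (SP n m f) (Sigma {..<n} Dc)"
  proof (rule dom_assemble)
    fix g x assume "g<n" "x<m"
    have "x \<in> nbhd m (Dc g)" unfolding Dc_def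
      apply (rule rot_dom[OF assms(2) _ \<open>x<m\<close> refl])
      using assms(2) apply simp
      using J0[of "(x + m - 0) mod m" k'] \<open>x<m\<close> assms(1) by auto
    thus "x \<in> nbhd m (Dc g) \<or> (\<exists>g'. adj (cycle_graph n) g' g \<and> f g \<in> Dc g' \<and> x = f g')" ..
  qed (use sub in auto)
  hence "domination_number (SP n m f) \<le> card (Sigma {..<n} Dc)" by (intro dn_le) auto
  also have "\<dots> \<le> (\<Sum>g<n. k')"
  proof (rule card_sigma_le[OF sub])
    fix g
    have "card (Dc g) \<le> card ((\<lambda>i. 3*i+1) ` {..<k'})" unfolding Dc_def by (rule card_image_le) simp
    also have "\<dots> \<le> k'" using card_image_le[of "{..<k'}" "\<lambda>i. 3*i+1"] by simp
    finally show "card (Dc g) \<le> k'" .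
  qed
  finally show ?thesis by (simp add: mult.commute)
qed

definition hub :: "nat \<Rightarrow> nat \<Rightarrow> nat" where
  "hub n g = (if g mod 3 = 1 then g - 1 else (g+1) mod n)"

lemma hub_props: assumes "n \<ge> 3" "g < n" "g mod 3 \<noteq> 0"
  shows "hub n g < n" "hub n g mod 3 = 0" "g = (hub n g + 1) mod n \<or> g = (hub n g + n - 1) mod n"
proof -
  have "hub n g < n \<and> hub n g mod 3 = 0 \<and> (g = (hub n g + 1) mod n \<or> g = (hub n g + n - 1) mod n)"
  proof (cases "g mod 3 = 1")
    case True
    hence "g \<ge> 1" by presburger
    thus ?thesis using True assms by (simp add: hub_def) presburger
  next
    case False
    hence g2: "g mod 3 = 2" using assms(3) by presburger
    show ?thesis
    proof (cases "g+1 < n")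
      case True
      have "(g+1+n-1) mod n = g" using assms(2) by simp
      thus ?thesis using True False g2 by (simp add: hub_def) presburger
    next
      case F2: False
      hence "g + 1 = n" using assms(2) by simp
      thus ?thesis using False assms by (simp add: hub_def)
    qed
  qed
  thus "hub n g < n" "hub n g mod 3 = 0" "g = (hub n g + 1) mod n \<or> g = (hub n g + n - 1) mod n" by auto
qed

lemma count_hubs: "card {g\<in>{..<n}. g mod 3 = (0::nat)} \<le> (n+2) div 3"
proof -
  have "{g\<in>{..<n}. g mod 3 = (0::nat)} \<subseteq> (\<lambda>i. 3*i) ` {..<(n+2) div 3}"
  proof
    fix g assume "g \<in> {g\<in>{..<n}. g mod 3 = (0::nat)}"
    hence "g < n" "g mod 3 = 0" by auto
    hence "g = 3*(g div 3)" "g div 3 < (n+2) div 3" by presburger+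
    thus "g \<in> (\<lambda>i. 3*i) ` {..<(n+2) div 3}" by blast
  qed
  hence "card {g\<in>{..<n}. g mod 3 = (0::nat)} \<le> card ((\<lambda>i. 3*i) ` {..<(n+2) div 3})"
    by (intro card_mono) auto
  also have "\<dots> \<le> (n+2) div 3" using card_image_le[of "{..<(n+2) div 3}" "\<lambda>i. 3*i"] by simp
  finally show ?thesis .
qed

lemma upper1:
  assumes "n \<ge> 3" "k \<ge> 1" "f ` {0..<n} \<subseteq> {0..<3*k+1}"
  shows "domination_number (SP n (3*k+1) f) \<le> k*n + (n+2) div 3"
proof -
  define m where "m = 3*k+1"
  have m3: "m \<ge> 3" using assms(2) by (simp add: m_def)
  have fm: "\<And>g. g<n \<Longrightarrow> f g < m" using assms(3) unfolding m_def image_subset_iff by auto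
  define a where "a = (\<lambda>g. f ((g+n-1) mod n))"
  define b where "b = (\<lambda>g. f ((g+1) mod n))"
  define d where "d = (\<lambda>g. (b g + m - a g) mod m)"
  have am: "\<And>g. a g < m" unfolding a_def using fm assms(1) by simp
  have bm: "\<And>g. b g < m" unfolding b_def using fm assms(1) by simp
  have dm: "\<And>g. d g < m" unfolding d_def using m3 by simp
  define Dc where "Dc = (\<lambda>g. if g mod 3 = 0 then rot m (a g) ` Jh (d g) m
                         else rot m (f (hub n g)) ` ((\<lambda>i. 3*i+2) ` {..<k}))"
  have sub: "\<And>g. Dc g \<subseteq> {0..<m}" using rot_lt m3 by (auto simp: Dc_def)
  have hubin: "\<And>h. h<n \<Longrightarrow> h mod 3 = 0 \<Longrightarrow> a h \<in> Dc h \<and> b h \<in> Dc h"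
  proof -
    fix h assume "h<n" "h mod 3 = 0"
    have "rot m (a h) 0 = a h" using am by (simp add: rot_def)
    moreover have "rot m (a h) (d h) = b h" unfolding d_def by (rule rot_inv[OF am bm])
    ultimately show "a h \<in> Dc h \<and> b h \<in> Dc h" unfolding Dc_def
      using \<open>h mod 3 = 0\<close> Jh_0[OF dm] Jh_d[OF dm] by (metis image_eqI)
  qed
  have "dominating_set (SP n m f) (Sigma {..<n} Dc)"
  proof (rule dom_assemble)
    fix g x assume g: "g<n" and x: "x<m"
    show "x \<in> nbhd m (Dc g) \<or> (\<exists>g'. adj (cycle_graph n) g' g \<and> f g \<in> Dc g' \<and> x = f g')"
    proof (cases "g mod 3 = 0")
      case True
      have "x \<in> nbhd m (rot m (a g) ` Jh (d g) m)"
        by (rule rot_dom[OF m3 am x refl Jh_dom[OF dm]]) (use x in simp)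
      thus ?thesis using True by (simp add: Dc_def)
    next
      case False
      let ?h = "hub n g"
      note hp = hub_props[OF assms(1) g False]
      have adjh: "adj (cycle_graph n) ?h g"
        using hp(3) adj_succ[OF assms(1) hp(1)] adj_pred[OF assms(1) hp(1)] adj_C_sym by metis
      have fgin: "f g \<in> Dc ?h"
        using hp(3) hubin[OF hp(1,2)] unfolding a_def b_def by metis
      show ?thesis
      proof (cases "x = f ?h")
        case True thus ?thesis using adjh fgin by blast
      next
        case xne: False
        have c: "f ?h < m" using fm hp(1) .
        define y where "y = (x + m - f ?h) mod m"
        have "y \<noteq> 0"
        proof
          assume "y = 0"
          hence "rot m (f ?h) 0 = x" using rot_inv[OF c x] y_def by simp
          thus False using xne c by (simp add: rot_def)
        qed
        moreover have "y < m" using m3 y_def by simp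
        ultimately have "1 \<le> y" "y \<le> 3*k" by (auto simp: m_def)
        have "x \<in> nbhd m (rot m (f ?h) ` ((\<lambda>i. 3*i+2) ` {..<k}))"
          by (rule rot_dom[OF m3 c x y_def]) (use Jn[OF \<open>1\<le>y\<close> \<open>y\<le>3*k\<close>] in blast)
        thus ?thesis using False by (simp add: Dc_def)
      qed
    qed
  qed (use sub in auto)
  hence "domination_number (SP n m f) \<le> card (Sigma {..<n} Dc)" by (intro dn_le) auto
  also have "\<dots> \<le> (\<Sum>g<n. k + (if g mod 3 = 0 then 1 else 0))"
  proof (rule card_sigma_le[OF sub])
    fix g
    show "card (Dc g) \<le> k + (if g mod 3 = 0 then 1 else 0)"
    proof (cases "g mod 3 = 0")
      case True
      have "card (Dc g) \<le> card (Jh (d g) m)" using True unfolding Dc_def by (simp add: card_image_le Jh_def)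
      also have "\<dots> \<le> k+1" using Jh_card[of "d g" k] dm[of g] by (simp add: m_def)
      finally show ?thesis using True by simp
    next
      case False
      have "card (Dc g) \<le> card ((\<lambda>i. 3*i+2) ` {..<k})" using False unfolding Dc_def by (simp add: card_image_le)
      also have "\<dots> \<le> k" using card_image_le[of "{..<k}" "\<lambda>i. 3*i+2"] by simp
      finally show ?thesis using False by simp
    qed
  qed
  also have "\<dots> = k*n + card {g\<in>{..<n}. g mod 3 = 0}"
  proof -
    have "(\<Sum>g<n. (if g mod 3 = 0 then 1 else 0::nat)) = (\<Sum>g\<in>{g\<in>{..<n}. g mod 3 = 0}. 1)"
      by (rule sum.inter_filter[symmetric]) simp
    thus ?thesis by (simp add: sum.distrib mult.commute)
  qed
  also have "\<dots> \<le> k*n + (n+2) div 3" using count_hubs by simp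
  finally show ?thesis by (simp add: m_def)
qed


lemma ceil3: "nat \<lceil>real n / 3\<rceil> = (n+2) div 3"
proof -
  define q where "q = (n+2) div 3"
  have h1: "n \<le> 3*q" "3*q < n + 3" unfolding q_def by presburger+
  have "\<lceil>real n / 3\<rceil> = int q"
  proof (rule ceiling_unique)
    show "real_of_int (int q) - 1 < real n / 3" using h1(2) by simp
    show "real n / 3 \<le> real_of_int (int q)" using h1(1) by simp
  qed
  thus ?thesis unfolding q_def by simp
qed

lemma usd_eq:
  assumes "m \<ge> 3" "n \<ge> 3"
    and up: "\<And>f. f ` {0..<n} \<subseteq> {0..<m} \<Longrightarrow> domination_number (SP n m f) \<le> B"
    and lo: "\<And>D. dominating_set (SP n m (\<lambda>_. 0)) D \<Longrightarrow> B \<le> card D"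
  shows "upper_sierpinski_domination (cycle_graph n) (cycle_graph m) = B"
  unfolding upper_sierpinski_domination_def verts_C
proof (rule Max_eqI)
  have "{domination_number (SP n m f) |f. f ` {0..<n} \<subseteq> {0..<m}} \<subseteq> {..n*m}"
    using dn_le_verts[of "SP n m _"] by auto
  thus "finite {domination_number (SP n m f) |f. f ` {0..<n} \<subseteq> {0..<m}}"
    using finite_subset by blast
  show "\<And>y. y \<in> {domination_number (SP n m f) |f. f ` {0..<n} \<subseteq> {0..<m}} \<Longrightarrow> y \<le> B"
    using up by auto
  have f0: "(\<lambda>_. 0::nat) ` {0..<n} \<subseteq> {0..<m}" using assms(1) by auto
  have "domination_number (SP n m (\<lambda>_. 0)) = B"
    using up[OF f0] dn_ge[of "SP n m (\<lambda>_. 0)" B] lo by fastforce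
  thus "B \<in> {domination_number (SP n m f) |f. f ` {0..<n} \<subseteq> {0..<m}}"
    using f0 by blast
qed

theorem theorem3p2:
  fixes n k p :: nat
  assumes "n \<ge> 3" and "k \<ge> 1" and "p \<in> {0, 1, 2}"
  shows "upper_sierpinski_domination (cycle_graph n) (cycle_graph (3 * k + p)) =
           (if p = 0 then k * n
            else if p = 1 then k * n + nat \<lceil>real n / 3\<rceil>
            else (k + 1) * n)"
proof -
  consider "p = 0" | "p = 1" | "p = 2" using assms(3) by auto
  thus ?thesis
  proof cases
    case 1
    have "upper_sierpinski_domination (cycle_graph n) (cycle_graph (3 * k)) = k * n"
    proof (rule usd_eq)
      show "3 \<le> 3*k" using assms(2) by simp
      show "\<And>f. domination_number (SP n (3*k) f) \<le> k*n"
        by (rule upper02) (use assms in auto)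
      show "\<And>D. dominating_set (SP n (3*k) (\<lambda>_. 0)) D \<Longrightarrow> k*n \<le> card D"
        by (rule lower0)
    qed (use assms in auto)
    thus ?thesis using 1 by simp
  next
    case 2
    have "upper_sierpinski_domination (cycle_graph n) (cycle_graph (3 * k + 1)) = k * n + (n+2) div 3"
    proof (rule usd_eq)
      show "3 \<le> 3*k+1" using assms(2) by simp
      show "\<And>f. f ` {0..<n} \<subseteq> {0..<3*k+1} \<Longrightarrow> domination_number (SP n (3*k+1) f) \<le> k*n + (n+2) div 3"
        by (rule upper1) (use assms in auto)
      show "\<And>D. dominating_set (SP n (3*k+1) (\<lambda>_. 0)) D \<Longrightarrow> k*n + (n+2) div 3 \<le> card D"
        by (rule lower1)
    qed (use assms in auto)
    thus ?thesis using 2 ceil3 by simp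
  next
    case 3
    have "upper_sierpinski_domination (cycle_graph n) (cycle_graph (3 * k + 2)) = (k+1) * n"
    proof (rule usd_eq)
      show "3 \<le> 3*k+2" using assms(2) by simp
      show "\<And>f. domination_number (SP n (3*k+2) f) \<le> (k+1)*n"
        by (rule upper02) (use assms in auto)
      show "\<And>D. dominating_set (SP n (3*k+2) (\<lambda>_. 0)) D \<Longrightarrow> (k+1)*n \<le> card D"
        by (rule lower2)
    qed (use assms in auto)
    thus ?thesis using 3 by simp
  qed
qed

end
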